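(* Let $m$ and $m_1$ be positive integers, $n=mm_1+2$, and let $\phi$ be a homogeneous polynomial on $\mathbb{R}^n$ of degree $m$ satisfying $|\nabla\phi(x)|^2=m^2|x|^{2m-2}$ and $\Delta\phi(x)=0$. Let $g$ be a $C^2$ function of one variable. Then $u(x)=g\big(\phi(x)/|x|^m\big)$ is $p$-harmonic if and only if, for some constants $C$ and $\alpha$, $$g'(z)=C(1-z^2)^{-\alpha},\qquad p=1+\frac{m_1}{2\alpha-1}.$$
   Context: The $p$-Laplacian of a $C^2$ function $u$ is $\Delta_p u:=|\nabla u|^2\Delta u+\tfrac{p-2}{2}\nabla u\cdot\nabla|\nabla u|^2$; $u$ is $p$-harmonic if $\Delta_p u=0$. *)

theory Defs
  imports "HOL-Analysis.Analysis"
begin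

definition grad :: "(real^'n \<Rightarrow> real) \<Rightarrow> real^'n \<Rightarrow> real^'n" where
  "grad f x = (\<chi> i. frechet_derivative f (at x) (axis i 1))"

definition partial2 :: "(real^'n \<Rightarrow> real) \<Rightarrow> 'n \<Rightarrow> 'n \<Rightarrow> real^'n \<Rightarrow> real" where
  "partial2 f i j x = frechet_derivative (\<lambda>y. grad f y $ i) (at x) (axis j 1)"

definition laplacian :: "(real^'n \<Rightarrow> real) \<Rightarrow> real^'n \<Rightarrow> real" where
  "laplacian f x = (\<Sum>i\<in>UNIV. partial2 f i i x)"

definition C2_on :: "(real^'n) set \<Rightarrow> (real^'n \<Rightarrow> real) \<Rightarrow> bool" where
  "C2_on S f \<longleftrightarrow> (\<forall>x\<in>S. f differentiable at x) \<and>
     (\<forall>i. \<forall>x\<in>S. (\<lambda>y. grad f y $ i) differentiable at x) \<and>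
     (\<forall>i j. continuous_on S (partial2 f i j))"

definition p_laplacian :: "real \<Rightarrow> (real^'n \<Rightarrow> real) \<Rightarrow> real^'n \<Rightarrow> real" where
  "p_laplacian p u x = (norm (grad u x))\<^sup>2 * laplacian u x
      + (p - 2) / 2 * (grad u x \<bullet> grad (\<lambda>y. (norm (grad u y))\<^sup>2) x)"

definition p_harmonic_on :: "real \<Rightarrow> (real^'n) set \<Rightarrow> (real^'n \<Rightarrow> real) \<Rightarrow> bool" where
  "p_harmonic_on p S u \<longleftrightarrow> C2_on S u \<and> (\<forall>x\<in>S. p_laplacian p u x = 0)"

definition homogeneous_poly :: "nat \<Rightarrow> (real^'n \<Rightarrow> real) \<Rightarrow> bool" where
  "homogeneous_poly m \<phi> \<longleftrightarrow> (\<exists>(A :: ('n \<Rightarrow> nat) set) (c :: ('n \<Rightarrow> nat) \<Rightarrow> real).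
      finite A \<and> (\<forall>a\<in>A. (\<Sum>i\<in>UNIV. a i) = m) \<and>
      (\<forall>x. \<phi> x = (\<Sum>a\<in>A. c a * (\<Prod>i\<in>UNIV. (x $ i) ^ a i))))"

definition C2_real_on :: "real set \<Rightarrow> (real \<Rightarrow> real) \<Rightarrow> bool" where
  "C2_real_on S g \<longleftrightarrow> (\<forall>z\<in>S. g differentiable at z) \<and>
     (\<forall>z\<in>S. deriv g differentiable at z) \<and> continuous_on S (deriv (deriv g))"

end

theory Submission
  imports Defs
begin

inductive poly_fun :: "(real^'n \<Rightarrow> real) \<Rightarrow> bool" where
  pf_const: "poly_fun (\<lambda>x. c)"
| pf_coord: "poly_fun (\<lambda>x. x $ i)"
| pf_add: "poly_fun f \<Longrightarrow> poly_fun g \<Longrightarrow> poly_fun (\<lambda>x. f x + g x)"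
| pf_mult: "poly_fun f \<Longrightarrow> poly_fun g \<Longrightarrow> poly_fun (\<lambda>x. f x * g x)"

lemma pf_deriv_ex:
  assumes "poly_fun f"
  shows "\<exists>G. (\<forall>j. poly_fun (G j)) \<and> (\<forall>x. (f has_derivative (\<lambda>h. \<Sum>j\<in>UNIV. h$j * G j x)) (at x))"
  using assms
proof (induction rule: poly_fun.induct)
  case (pf_const c)
  show ?case by (rule exI[of _ "\<lambda>j x. 0"]) (auto intro: poly_fun.pf_const)
next
  case (pf_coord i)
  have "(\<lambda>h::real^'a. \<Sum>j\<in>UNIV. h$j * (if j = i then 1 else 0)) = (\<lambda>h. h $ i)"
    by (auto simp: if_distrib cong: if_cong)
  moreover have "((\<lambda>x::real^'a. x $ i) has_derivative (\<lambda>h. h $ i)) (at x)" for x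
    by (rule bounded_linear_imp_has_derivative) (rule bounded_linear_vec_nth)
  ultimately show ?case
    by (intro exI[of _ "\<lambda>j x. if j = i then 1 else 0"]) (auto intro: poly_fun.pf_const)
next
  case (pf_add f g)
  then obtain F G where F: "\<forall>j. poly_fun (F j)" "\<forall>x. (f has_derivative (\<lambda>h. \<Sum>j\<in>UNIV. h$j * F j x)) (at x)"
    and G: "\<forall>j. poly_fun (G j)" "\<forall>x. (g has_derivative (\<lambda>h. \<Sum>j\<in>UNIV. h$j * G j x)) (at x)" by blast
  show ?case
  proof (intro exI[of _ "\<lambda>j x. F j x + G j x"] conjI allI)
    fix j show "poly_fun (\<lambda>x. F j x + G j x)" using F G by (auto intro: poly_fun.pf_add)
  next
    fix x
    show "((\<lambda>x. f x + g x) has_derivative (\<lambda>h. \<Sum>j\<in>UNIV. h$j * (F j x + G j x))) (at x)"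
      using has_derivative_add[OF F(2)[rule_format, of x] G(2)[rule_format, of x]]
      by (simp add: distrib_left sum.distrib)
  qed
next
  case (pf_mult f g)
  then obtain F G where F: "\<forall>j. poly_fun (F j)" "\<forall>x. (f has_derivative (\<lambda>h. \<Sum>j\<in>UNIV. h$j * F j x)) (at x)"
    and G: "\<forall>j. poly_fun (G j)" "\<forall>x. (g has_derivative (\<lambda>h. \<Sum>j\<in>UNIV. h$j * G j x)) (at x)" by blast
  show ?case
  proof (intro exI[of _ "\<lambda>j x. f x * G j x + g x * F j x"] conjI allI)
    fix j show "poly_fun (\<lambda>x. f x * G j x + g x * F j x)" using F G pf_mult
      by (auto intro!: poly_fun.pf_add poly_fun.pf_mult)
  next
    fix x
    show "((\<lambda>x. f x * g x) has_derivative (\<lambda>h. \<Sum>j\<in>UNIV. h$j * (f x * G j x + g x * F j x))) (at x)"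
      using has_derivative_mult[OF F(2)[rule_format, of x] G(2)[rule_format, of x]]
      by (simp add: distrib_left sum.distrib sum_distrib_left sum_distrib_right algebra_simps)
  qed
qed

lemma grad_eqI:
  assumes "(f has_derivative (\<lambda>h. D \<bullet> h)) (at x)"
  shows "grad f x = D"
proof -
  have "frechet_derivative f (at x) = (\<lambda>h. D \<bullet> h)" using frechet_derivative_at[OF assms] by simp
  then show ?thesis by (simp add: grad_def vec_eq_iff inner_axis)
qed

lemma pf_grad:
  assumes "poly_fun f"
  shows "(f has_derivative (\<lambda>h. grad f x \<bullet> h)) (at x)" "poly_fun (\<lambda>x. grad f x $ j)"
proof -
  obtain G where G: "\<forall>j. poly_fun (G j)" "\<forall>x. (f has_derivative (\<lambda>h. \<Sum>j\<in>UNIV. h$j * G j x)) (at x)"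
    using pf_deriv_ex[OF assms] by blast
  have e: "(\<lambda>h. \<Sum>j\<in>UNIV. h$j * G j x) = (\<lambda>h. (\<chi> j. G j x) \<bullet> h)" for x
    by (auto simp: inner_vec_def mult.commute)
  have gr: "grad f x = (\<chi> j. G j x)" for x using G(2) e by (metis grad_eqI)
  show "(f has_derivative (\<lambda>h. grad f x \<bullet> h)) (at x)" using G(2) e gr by metis
  have "(\<lambda>x. grad f x $ j) = G j" using gr by auto
  then show "poly_fun (\<lambda>x. grad f x $ j)" using G by simp
qed

lemma pf_cont: "poly_fun f \<Longrightarrow> continuous_on UNIV f"
  by (meson differentiable_at_imp_differentiable_on differentiable_def differentiable_imp_continuous_on pf_grad(1))

lemma pf_sum: "finite A \<Longrightarrow> (\<And>a. a \<in> A \<Longrightarrow> poly_fun (f a)) \<Longrightarrow> poly_fun (\<lambda>x. \<Sum>a\<in>A. f a x)"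
  by (induction A rule: finite_induct) (auto intro: poly_fun.intros)

lemma pf_prod: "finite A \<Longrightarrow> (\<And>a. a \<in> A \<Longrightarrow> poly_fun (f a)) \<Longrightarrow> poly_fun (\<lambda>x. \<Prod>a\<in>A. f a x)"
  by (induction A rule: finite_induct) (auto intro: poly_fun.intros)

lemma pf_pow: "poly_fun f \<Longrightarrow> poly_fun (\<lambda>x. f x ^ k)"
  by (induction k) (auto intro: poly_fun.intros)

lemma homog_pf:
  assumes "homogeneous_poly m \<phi>" shows "poly_fun \<phi>"
proof -
  obtain A c where A: "finite A" "\<forall>x. \<phi> x = (\<Sum>a\<in>A. c a * (\<Prod>i\<in>UNIV. (x $ i) ^ a i))"
    using assms unfolding homogeneous_poly_def by blast
  have "poly_fun (\<lambda>x. \<Sum>a\<in>A. c a * (\<Prod>i\<in>UNIV. (x $ i) ^ a i))"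
    by (intro pf_sum A pf_mult pf_const pf_prod pf_pow pf_coord) auto
  moreover have "\<phi> = (\<lambda>x. \<Sum>a\<in>A. c a * (\<Prod>i\<in>UNIV. (x $ i) ^ a i))" using A by auto
  ultimately show ?thesis by simp
qed

lemma homog_scale:
  assumes "homogeneous_poly m \<phi>" shows "\<phi> (t *\<^sub>R x) = t ^ m * \<phi> x"
proof -
  obtain A c where A: "finite A" "\<forall>a\<in>A. (\<Sum>i\<in>UNIV. a i) = m" "\<forall>x. \<phi> x = (\<Sum>a\<in>A. c a * (\<Prod>i\<in>UNIV. (x $ i) ^ a i))"
    using assms unfolding homogeneous_poly_def by blast
  have P: "(\<Prod>i\<in>UNIV. ((t *\<^sub>R x) $ i) ^ a i) = t ^ m * (\<Prod>i\<in>UNIV. (x $ i) ^ a i)" if "a \<in> A" for a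
  proof -
    have "(\<Prod>i\<in>UNIV. ((t *\<^sub>R x) $ i) ^ a i) = (\<Prod>i\<in>UNIV. t ^ a i) * (\<Prod>i\<in>UNIV. (x $ i) ^ a i)"
      by (simp add: power_mult_distrib prod.distrib)
    moreover have "(\<Prod>i\<in>UNIV. t ^ a i) = t ^ m" using A(2) that power_sum[of t a UNIV] by simp
    ultimately show ?thesis by simp
  qed
  show ?thesis using A(3) P by (simp add: sum_distrib_left algebra_simps)
qed


lemma norm_pow_deriv:
  fixes x :: "'a::real_inner"
  assumes "x \<noteq> 0"
  shows "((\<lambda>y. norm y ^ k) has_derivative (\<lambda>h. (real k * norm x ^ k / (norm x)\<^sup>2) * (x \<bullet> h))) (at x)"
proof -
  have "((\<lambda>y. norm y ^ k) has_derivative (\<lambda>h. of_nat k * (h \<bullet> sgn x) * norm x ^ (k - 1))) (at x)"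
    by (rule has_derivative_power[OF has_derivative_norm[OF assms]])
  moreover have "of_nat k * (h \<bullet> sgn x) * norm x ^ (k - 1) = (real k * norm x ^ k / (norm x)\<^sup>2) * (x \<bullet> h)" for h
  proof (cases k)
    case 0 then show ?thesis by simp
  next
    case (Suc j)
    have "norm x > 0" using assms by simp
    then show ?thesis
      by (simp add: Suc sgn_div_norm inner_commute power2_eq_square field_simps)
  qed
  ultimately show ?thesis by simp
qed

lemma alg:
  fixes R Q M Z G1 G2 p n m1 :: real
  assumes "R > 0" "Q = M\<^sup>2 * (1 - Z\<^sup>2) / R\<^sup>2" "n = M * m1 + 2"
  shows "G1\<^sup>2 * Q * (G2 * Q + G1 * (- M * (n + M - 2) * Z / R\<^sup>2))
     + (p - 2) / 2 * (G1 * ((M\<^sup>2 * (2 * G1 * G2 * (1 - Z\<^sup>2) + G1\<^sup>2 * (- 2 * Z)) / R\<^sup>2) * Q))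
   = Q * (M\<^sup>2 / R\<^sup>2) * G1\<^sup>2 * ((p - 1) * (1 - Z\<^sup>2) * G2 - (m1 + p - 1) * Z * G1)"
  unfolding assms(2,3) using assms(1) by (simp add: field_simps power2_eq_square)

locale hsetup =
  fixes m :: nat and \<phi> :: "real^'n \<Rightarrow> real"
  assumes m1: "m \<ge> 1" and hp: "homogeneous_poly m \<phi>"
    and gradn: "\<forall>x. (norm (grad \<phi> x))\<^sup>2 = (real m)\<^sup>2 * norm x ^ (2 * m - 2)"
    and lap0: "\<forall>x. laplacian \<phi> x = 0"
begin

lemma pf: "poly_fun \<phi>" using homog_pf[OF hp] .

lemma dphi: "(\<phi> has_derivative (\<lambda>h. grad \<phi> x \<bullet> h)) (at x)" using pf_grad(1)[OF pf] .

lemma pf_g: "poly_fun (\<lambda>x. grad \<phi> x $ i)" using pf_grad(2)[OF pf] .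

definition H where "H i x = grad (\<lambda>y. grad \<phi> y $ i) x"

lemma dgrad: "((\<lambda>y. grad \<phi> y $ i) has_derivative (\<lambda>h. H i x \<bullet> h)) (at x)"
  unfolding H_def using pf_grad(1)[OF pf_g] .

lemma trH: "(\<Sum>i\<in>UNIV. H i x $ i) = 0"
  using lap0 by (simp add: laplacian_def partial2_def H_def grad_def)

lemma euler: "grad \<phi> y \<bullet> y = real m * \<phi> y"
proof -
  have "((\<lambda>t. \<phi> (t *\<^sub>R y)) has_derivative (\<lambda>s. grad \<phi> (1 *\<^sub>R y) \<bullet> (s *\<^sub>R y))) (at 1)"
    by (rule has_derivative_compose[OF _ dphi]) (auto intro!: derivative_eq_intros)
  moreover have "(\<lambda>s. grad \<phi> (1 *\<^sub>R y) \<bullet> (s *\<^sub>R y)) = (*) (grad \<phi> y \<bullet> y)"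
    by (auto simp: fun_eq_iff)
  ultimately have "DERIV (\<lambda>t. \<phi> (t *\<^sub>R y)) 1 :> grad \<phi> y \<bullet> y"
    by (simp add: has_field_derivative_def)
  moreover have "DERIV (\<lambda>t. \<phi> (t *\<^sub>R y)) 1 :> real m * \<phi> y"
  proof -
    have "DERIV (\<lambda>t. t ^ m * \<phi> y) 1 :> real m * \<phi> y"
      by (auto intro!: derivative_eq_intros)
    then show ?thesis by (simp add: homog_scale[OF hp])
  qed
  ultimately show ?thesis by (rule DERIV_unique)
qed


definition "z x = \<phi> x / norm x ^ m"
definition "a1 x = 1 / norm x ^ m"
definition "a2 x = real m * \<phi> x / (norm x ^ m * (norm x)\<^sup>2)"
definition "Dz x = a1 x *\<^sub>R grad \<phi> x - a2 x *\<^sub>R x"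
definition "A1 x = (- real m / (norm x ^ m * (norm x)\<^sup>2)) *\<^sub>R x"
definition "A2 x = (real m / (norm x ^ m * (norm x)\<^sup>2)) *\<^sub>R grad \<phi> x
   - (real m * (real m + 2) * \<phi> x / (norm x ^ m * ((norm x)\<^sup>2 * (norm x)\<^sup>2))) *\<^sub>R x"
definition "D2 x i h = (A1 x \<bullet> h) * grad \<phi> x $ i + a1 x * (H i x \<bullet> h) - (A2 x \<bullet> h) * x $ i - a2 x * h $ i"

lemma gradn': "(norm (grad \<phi> x))\<^sup>2 * (norm x)\<^sup>2 = (real m)\<^sup>2 * (norm x ^ m)\<^sup>2"
proof -
  have "norm x ^ (2 * m - 2) * (norm x)\<^sup>2 = (norm x ^ m)\<^sup>2"
  proof -
    have "2 * m - 2 + 2 = 2 * m" using m1 by simp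
    then have "norm x ^ (2 * m - 2) * (norm x)\<^sup>2 = norm x ^ (2 * m)" by (metis power_add)
    then show ?thesis by (simp add: power_mult mult.commute)
  qed
  then show ?thesis using gradn by (metis mult.assoc)
qed

lemma da1: assumes "x \<noteq> 0" shows "(a1 has_derivative (\<lambda>h. A1 x \<bullet> h)) (at x)"
proof -
  have "((\<lambda>y. 1 / norm y ^ m) has_derivative (\<lambda>h. - 1 * (inverse (norm x ^ m) * ((real m * norm x ^ m / (norm x)\<^sup>2) * (x \<bullet> h)) * inverse (norm x ^ m)) + 0 / norm x ^ m)) (at x)"
    by (rule has_derivative_divide[OF has_derivative_const norm_pow_deriv[OF assms]]) (use assms in simp)
  moreover have "(\<lambda>h. - 1 * (inverse (norm x ^ m) * ((real m * norm x ^ m / (norm x)\<^sup>2) * (x \<bullet> h)) * inverse (norm x ^ m)) + 0 / norm x ^ m) = (\<lambda>h. A1 x \<bullet> h)"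
    using assms by (auto simp: A1_def field_simps power2_eq_square)
  ultimately show ?thesis unfolding a1_def[abs_def] by simp
qed

lemma da2: assumes "x \<noteq> 0" shows "(a2 has_derivative (\<lambda>h. A2 x \<bullet> h)) (at x)"
proof -
  have d: "((\<lambda>y. norm y ^ m * (norm y)\<^sup>2) has_derivative (\<lambda>h. norm x ^ m * ((real 2 * (norm x)\<^sup>2 / (norm x)\<^sup>2) * (x \<bullet> h)) + (real m * norm x ^ m / (norm x)\<^sup>2) * (x \<bullet> h) * (norm x)\<^sup>2)) (at x)"
    by (rule has_derivative_mult[OF norm_pow_deriv[OF assms] norm_pow_deriv[OF assms]])
  have "((\<lambda>y. real m * \<phi> y / (norm y ^ m * (norm y)\<^sup>2)) has_derivative
     (\<lambda>h. - (real m * \<phi> x) * (inverse (norm x ^ m * (norm x)\<^sup>2) * (norm x ^ m * ((real 2 * (norm x)\<^sup>2 / (norm x)\<^sup>2) * (x \<bullet> h)) + (real m * norm x ^ m / (norm x)\<^sup>2) * (x \<bullet> h) * (norm x)\<^sup>2) * inverse (norm x ^ m * (norm x)\<^sup>2)) + (real m * (grad \<phi> x \<bullet> h)) / (norm x ^ m * (norm x)\<^sup>2))) (at x)"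
    by (rule has_derivative_divide[OF has_derivative_mult[OF has_derivative_const dphi, simplified] d]) (use assms in simp)
  moreover have "(\<lambda>h. - (real m * \<phi> x) * (inverse (norm x ^ m * (norm x)\<^sup>2) * (norm x ^ m * ((real 2 * (norm x)\<^sup>2 / (norm x)\<^sup>2) * (x \<bullet> h)) + (real m * norm x ^ m / (norm x)\<^sup>2) * (x \<bullet> h) * (norm x)\<^sup>2) * inverse (norm x ^ m * (norm x)\<^sup>2)) + (real m * (grad \<phi> x \<bullet> h)) / (norm x ^ m * (norm x)\<^sup>2)) = (\<lambda>h. A2 x \<bullet> h)"
    using assms by (auto simp: A2_def inner_diff_left field_simps power2_eq_square)
  ultimately show ?thesis unfolding a2_def[abs_def] by simp
qed


lemma dz: assumes "x \<noteq> 0" shows "(z has_derivative (\<lambda>h. Dz x \<bullet> h)) (at x)"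
proof -
  have "((\<lambda>y. \<phi> y * a1 y) has_derivative (\<lambda>h. \<phi> x * (A1 x \<bullet> h) + (grad \<phi> x \<bullet> h) * a1 x)) (at x)"
    by (rule has_derivative_mult[OF dphi da1[OF assms]])
  moreover have "(\<lambda>h. \<phi> x * (A1 x \<bullet> h) + (grad \<phi> x \<bullet> h) * a1 x) = (\<lambda>h. Dz x \<bullet> h)"
    using assms by (auto simp: A1_def Dz_def a1_def a2_def inner_diff_left field_simps)
  moreover have "(\<lambda>y. \<phi> y * a1 y) = z" by (auto simp: z_def a1_def)
  ultimately show ?thesis by simp
qed

lemma dDz: assumes "x \<noteq> 0" shows "((\<lambda>y. Dz y $ i) has_derivative D2 x i) (at x)"
proof -
  have d: "((\<lambda>y. y $ i) has_derivative (\<lambda>h. h $ i)) (at x)"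
    by (rule bounded_linear_imp_has_derivative) (rule bounded_linear_vec_nth)
  have "((\<lambda>y. a1 y * grad \<phi> y $ i - a2 y * y $ i) has_derivative
     (\<lambda>h. (a1 x * (H i x \<bullet> h) + (A1 x \<bullet> h) * grad \<phi> x $ i) - (a2 x * h $ i + (A2 x \<bullet> h) * x $ i))) (at x)"
    by (rule has_derivative_diff[OF has_derivative_mult[OF da1[OF assms] dgrad] has_derivative_mult[OF da2[OF assms] d]])
  moreover have "(\<lambda>h. (a1 x * (H i x \<bullet> h) + (A1 x \<bullet> h) * grad \<phi> x $ i) - (a2 x * h $ i + (A2 x \<bullet> h) * x $ i)) = D2 x i"
    by (auto simp: D2_def algebra_simps)
  moreover have "(\<lambda>y. a1 y * grad \<phi> y $ i - a2 y * y $ i) = (\<lambda>y. Dz y $ i)" by (auto simp: Dz_def)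
  ultimately show ?thesis by simp
qed

lemma norm_Dz: assumes "x \<noteq> 0" shows "(norm (Dz x))\<^sup>2 = (real m)\<^sup>2 * (1 - (z x)\<^sup>2) / (norm x)\<^sup>2"
proof -
  have R: "norm x > 0" using assms by simp
  have G: "(norm (grad \<phi> x))\<^sup>2 = (real m)\<^sup>2 * (norm x ^ m)\<^sup>2 / (norm x)\<^sup>2"
    using gradn'[of x] R by (simp add: field_simps)
  have "(norm (Dz x))\<^sup>2 = (a1 x)\<^sup>2 * (grad \<phi> x \<bullet> grad \<phi> x) - 2 * a1 x * a2 x * (grad \<phi> x \<bullet> x) + (a2 x)\<^sup>2 * (x \<bullet> x)"
    unfolding power2_norm_eq_inner by (simp add: Dz_def inner_diff_left inner_diff_right inner_commute algebra_simps power2_eq_square)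
  also have "\<dots> = (a1 x)\<^sup>2 * (norm (grad \<phi> x))\<^sup>2 - 2 * a1 x * a2 x * (grad \<phi> x \<bullet> x) + (a2 x)\<^sup>2 * (norm x)\<^sup>2"
    by (simp add: power2_norm_eq_inner)
  also have "\<dots> = (real m)\<^sup>2 * (1 - (z x)\<^sup>2) / (norm x)\<^sup>2"
    unfolding G euler using R by (simp add: a1_def a2_def z_def field_simps power2_eq_square)
  finally show ?thesis .
qed

lemma Dz_x: assumes "x \<noteq> 0" shows "Dz x \<bullet> x = 0"
  using assms by (simp add: Dz_def inner_diff_left euler a1_def a2_def power2_norm_eq_inner[symmetric] field_simps power2_eq_square)

lemma trD2: assumes "x \<noteq> 0"
  shows "(\<Sum>i\<in>UNIV. D2 x i (axis i 1)) = - real m * (real CARD('n) + real m - 2) * z x / (norm x)\<^sup>2"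
proof -
  have R: "norm x > 0" using assms by simp
  have "(\<Sum>i\<in>UNIV. D2 x i (axis i 1)) = (\<Sum>i\<in>UNIV. A1 x $ i * grad \<phi> x $ i + a1 x * H i x $ i - A2 x $ i * x $ i - a2 x)"
    by (simp add: D2_def inner_axis)
  also have "\<dots> = A1 x \<bullet> grad \<phi> x + a1 x * (\<Sum>i\<in>UNIV. H i x $ i) - A2 x \<bullet> x - real CARD('n) * a2 x"
    by (simp add: sum.distrib sum_subtractf sum_distrib_left inner_vec_def)
  also have "\<dots> = - real m * (real CARD('n) + real m - 2) * z x / (norm x)\<^sup>2"
    unfolding trH using R
    by (simp add: A1_def A2_def inner_diff_left inner_commute[of x "grad \<phi> x"] euler a2_def z_def
        power2_norm_eq_inner[symmetric] field_simps power2_eq_square)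
  finally show ?thesis .
qed


lemma z_bound: assumes "x \<noteq> 0" shows "(z x)\<^sup>2 \<le> 1"
proof -
  have "0 \<le> (norm (Dz x))\<^sup>2" by simp
  then have "0 \<le> (real m)\<^sup>2 * (1 - (z x)\<^sup>2) / (norm x)\<^sup>2" using norm_Dz[OF assms] by simp
  then have "0 \<le> (real m)\<^sup>2 * (1 - (z x)\<^sup>2)" using assms by (simp add: divide_nonneg_pos zero_le_divide_iff)
  then show ?thesis using m1 by (simp add: zero_le_mult_iff)
qed

lemma z_scale: assumes "x \<noteq> 0" shows "z (x /\<^sub>R norm x) = z x"
proof -
  have R: "norm x > 0" using assms by simp
  have "\<phi> (x /\<^sub>R norm x) = (1 / norm x) ^ m * \<phi> x" using homog_scale[OF hp] by (simp add: divide_inverse)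
  then show ?thesis using R by (simp add: z_def power_divide)
qed

lemma z_cont: "continuous_on (UNIV - {0}) z"
  by (subst continuous_on_eq_continuous_at) (auto intro: has_derivative_continuous[OF dz])

lemma Dz_zero_max:
  assumes "x \<noteq> 0" and "(\<forall>y\<in>UNIV - {0}. z y \<le> z x) \<or> (\<forall>y\<in>UNIV - {0}. z x \<le> z y)"
  shows "(z x)\<^sup>2 = 1"
proof -
  have "(\<lambda>h. Dz x \<bullet> h) = (\<lambda>v. 0)"
    by (rule differential_zero_maxmin[of x "UNIV - {0}"]) (use assms dz in auto)
  then have "Dz x \<bullet> Dz x = 0" by metis
  then have "(norm (Dz x))\<^sup>2 = 0" by (simp add: power2_norm_eq_inner)
  then have "(real m)\<^sup>2 * (1 - (z x)\<^sup>2) = 0" using norm_Dz[OF assms(1)] assms(1) by simp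
  then show ?thesis using m1 by simp
qed

lemma z_surj:
  assumes n2: "CARD('n) \<ge> 2" and t: "-1 < t" "t < 1"
  shows "\<exists>x. x \<noteq> 0 \<and> \<bar>\<phi> x\<bar> < norm x ^ m \<and> z x = t"
proof -
  let ?S = "sphere (0::real^'n) 1"
  have zc: "continuous_on ?S z" by (rule continuous_on_subset[OF z_cont]) auto
  obtain i :: 'n where True by simp
  have "axis i 1 \<in> ?S" by (simp add: norm_axis_1)
  then have ne: "?S \<noteq> {}" by blast
  obtain xM where xM: "xM \<in> ?S" "\<forall>y\<in>?S. z y \<le> z xM"
    using continuous_attains_sup[OF compact_sphere ne zc] by blast
  obtain xm where xm: "xm \<in> ?S" "\<forall>y\<in>?S. z xm \<le> z y"
    using continuous_attains_inf[OF compact_sphere ne zc] by blast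
  have inS: "y /\<^sub>R norm y \<in> ?S" if "y \<noteq> 0" for y using that by simp
  have M: "(z xM)\<^sup>2 = 1"
    by (rule Dz_zero_max) (use xM inS z_scale in \<open>auto, metis\<close>)
  have mm: "(z xm)\<^sup>2 = 1"
    by (rule Dz_zero_max) (use xm inS z_scale in \<open>auto, metis\<close>)
  have neq: "z xM \<noteq> z xm"
  proof
    assume eq: "z xM = z xm"
    define c where "c = z xM"
    have zc: "z y = c" if "y \<noteq> 0" for y
      using xM(2)[rule_format, OF inS[OF that]] xm(2)[rule_format, OF inS[OF that]] z_scale[OF that] eq
      unfolding c_def by linarith
    have Dz0: "Dz y = 0" if "y \<noteq> 0" for y
    proof -
      have "(z has_derivative (\<lambda>h. 0)) (at y)"
        by (rule has_derivative_transform_within_open[where f="\<lambda>y. c" and s="UNIV - {0}"]) (use that zc in auto)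
      then have "(\<lambda>h. Dz y \<bullet> h) = (\<lambda>h. 0)" using has_derivative_unique dz[OF that] by blast
      then have "Dz y \<bullet> Dz y = 0" by metis
      then show ?thesis by simp
    qed
    have x0: "xM \<noteq> 0" using xM by auto
    have "D2 xM i = (\<lambda>h. 0)" for i
    proof -
      have "((\<lambda>y. Dz y $ i) has_derivative (\<lambda>h. 0)) (at xM)"
        by (rule has_derivative_transform_within_open[where f="\<lambda>y. 0" and s="UNIV - {0}"]) (use x0 Dz0 in auto)
      then show ?thesis using has_derivative_unique dDz[OF x0] by blast
    qed
    then have "- real m * (real CARD('n) + real m - 2) * z xM / (norm xM)\<^sup>2 = 0"
      using trD2[OF x0] by simp
    then have "z xM = 0" using m1 n2 x0 by simp
    then show False using M by simp
  qed
  have le: "z xm \<le> z xM" using xm xM by auto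
  have zM: "z xM = 1" and zm: "z xm = -1"
    using M mm neq le by (auto simp: power2_eq_1_iff)
  have "connected (z ` ?S)"
    by (rule connected_continuous_image[OF zc]) (rule connected_sphere, simp add: n2)
  then have "t \<in> z ` ?S" using xM(1) xm(1) zM zm t unfolding connected_iff_interval
    by (metis image_eqI less_eq_real_def)
  then obtain x where x: "x \<in> ?S" "z x = t" by blast
  then have x0: "x \<noteq> 0" by auto
  have "\<bar>\<phi> x\<bar> = \<bar>t\<bar> * norm x ^ m" using x x0 by (simp add: z_def abs_divide)
  then have "\<bar>\<phi> x\<bar> < norm x ^ m" using t x0 by simp
  then show ?thesis using x x0 by blast
qed


definition "S = {x. x \<noteq> 0 \<and> \<bar>\<phi> x\<bar> < norm x ^ m}"

lemma S_alt: "S = {x. \<bar>\<phi> x\<bar> < norm x ^ m}"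
  unfolding S_def using m1 by (auto simp: power_0_left)

lemma open_S: "open S"
  unfolding S_alt by (rule open_Collect_less) (intro continuous_intros pf_cont[OF pf])+

lemma S_nz: "x \<in> S \<Longrightarrow> x \<noteq> 0" by (simp add: S_def)

lemma z_S: assumes "x \<in> S" shows "z x \<in> {-1<..<1}"
proof -
  have "norm x ^ m > 0" using assms by (simp add: S_def)
  then have "\<bar>z x\<bar> < 1" using assms by (simp add: S_def z_def abs_divide)
  then show ?thesis by (simp add: abs_less_iff)
qed

lemma cont_grad: "continuous_on A (\<lambda>x. grad \<phi> x $ i)"
  using pf_cont[OF pf_g] continuous_on_subset by blast

lemma cont_H: "continuous_on A (\<lambda>x. H i x $ j)"
  unfolding H_def using pf_cont[OF pf_grad(2)[OF pf_g]] continuous_on_subset by blast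

lemma cont_phi: "continuous_on A \<phi>"
  using pf_cont[OF pf] continuous_on_subset by blast

end



lemma ode_fwd:
  fixes g :: "real \<Rightarrow> real" and p mm :: real
  assumes g: "C2_real_on {-1<..<1} g" and p: "p \<noteq> 1" and mm: "mm > 0"
    and E: "\<forall>t\<in>{-1<..<1}. (deriv g t)\<^sup>2 * ((p - 1) * (1 - t\<^sup>2) * deriv (deriv g) t - (mm + p - 1) * t * deriv g t) = 0"
  shows "\<exists>C \<alpha>::real. (\<forall>z\<in>{-1<..<1}. deriv g z = C * (1 - z\<^sup>2) powr (-\<alpha>)) \<and> p = 1 + mm / (2 * \<alpha> - 1)"
proof -
  let ?I = "{-1<..<1::real}"
  define \<alpha> where "\<alpha> = (mm + p - 1) / (2 * (p - 1))"
  have p1: "p - 1 \<noteq> 0" using p by simp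
  have a1: "2 * \<alpha> - 1 = mm / (p - 1)" unfolding \<alpha>_def using p1 by (simp add: field_simps)
  have pa: "p = 1 + mm / (2 * \<alpha> - 1)" unfolding a1 using mm p1 by simp
  have a2: "2 * \<alpha> * (p - 1) = mm + p - 1" unfolding \<alpha>_def using p1 by (simp add: field_simps)
  have d1: "DERIV g t :> deriv g t" if "t \<in> ?I" for t
    using g that by (simp add: C2_real_on_def DERIV_deriv_iff_real_differentiable)
  have d2: "DERIV (deriv g) t :> deriv (deriv g) t" if "t \<in> ?I" for t
    using g that by (simp add: C2_real_on_def DERIV_deriv_iff_real_differentiable)
  have pos: "1 - t\<^sup>2 > 0" if "t \<in> ?I" for t
    using that by (simp add: abs_square_less_1 abs_less_iff)
  define q where "q t = deriv g t * (1 - t\<^sup>2) powr \<alpha>" for t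
  have dq: "DERIV q t :> deriv (deriv g) t * (1 - t\<^sup>2) powr \<alpha> + deriv g t * (\<alpha> * (1 - t\<^sup>2) powr (\<alpha> - 1) * (- 2 * t))"
    if "t \<in> ?I" for t
    unfolding q_def
    by (rule derivative_eq_intros DERIV_fun_powr d2 that | (use pos that in simp))+
  have qcont: "continuous_on ?I q"
    using dq by (meson DERIV_continuous continuous_at_imp_continuous_on)
  have dq0: "DERIV q t :> 0" if "t \<in> ?I" "deriv g t \<noteq> 0" for t
  proof -
    have "(p - 1) * (1 - t\<^sup>2) * deriv (deriv g) t = (mm + p - 1) * t * deriv g t"
      using E that by auto
    moreover have "(p - 1) * ((1 - t\<^sup>2) * deriv (deriv g) t - 2 * \<alpha> * t * deriv g t)
       = (p - 1) * (1 - t\<^sup>2) * deriv (deriv g) t - (2 * \<alpha> * (p - 1)) * t * deriv g t"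
      by (simp add: algebra_simps)
    ultimately have "(p - 1) * ((1 - t\<^sup>2) * deriv (deriv g) t - 2 * \<alpha> * t * deriv g t) = 0"
      using a2 by simp
    then have e: "(1 - t\<^sup>2) * deriv (deriv g) t = 2 * \<alpha> * t * deriv g t" using p1 by simp
    have hp: "(1 - t\<^sup>2) powr \<alpha> = (1 - t\<^sup>2) * (1 - t\<^sup>2) powr (\<alpha> - 1)"
      using pos[OF that(1)] by (simp add: powr_diff field_simps powr_minus)
    have "deriv (deriv g) t * (1 - t\<^sup>2) powr \<alpha> + deriv g t * (\<alpha> * (1 - t\<^sup>2) powr (\<alpha> - 1) * (- 2 * t))
       = (1 - t\<^sup>2) powr (\<alpha> - 1) * ((1 - t\<^sup>2) * deriv (deriv g) t - 2 * \<alpha> * t * deriv g t)"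
      unfolding hp by (simp add: algebra_simps)
    also have "\<dots> = 0" using e by simp
    finally show ?thesis using dq[OF that(1)] by simp
  qed
  show ?thesis
  proof (cases "\<forall>t\<in>?I. deriv g t = 0")
    case True
    then show ?thesis using pa by (intro exI[of _ 0] exI[of _ \<alpha>]) auto
  next
    case False
    then obtain t0 where t0: "t0 \<in> ?I" "deriv g t0 \<noteq> 0" by blast
    define c where "c = q t0"
    define U where "U = ?I \<inter> q -` (- {c})"
    define V where "V = interior {t \<in> ?I. q t = c}"
    have oU: "open U" unfolding U_def by (rule continuous_open_preimage[OF qcont]) auto
    have oV: "open V" unfolding V_def by simp
    have "U \<inter> V \<inter> ?I = {}" unfolding U_def V_def using interior_subset by fastforce
    moreover have "?I \<subseteq> U \<union> V"
    proof
      fix t assume t: "t \<in> ?I"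
      show "t \<in> U \<union> V"
      proof (cases "q t = c")
        case False then show ?thesis using t unfolding U_def by auto
      next
        case True
        have "c \<noteq> 0" unfolding c_def q_def using t0 pos[OF t0(1)] by simp
        then have gt: "deriv g t \<noteq> 0" using True unfolding q_def by auto
        have "continuous (at t) (deriv g)" using d2 t DERIV_isCont by blast
        then obtain e1 where e1: "e1 > 0" "\<forall>y. dist t y < e1 \<longrightarrow> deriv g y \<noteq> 0"
          using continuous_at_avoid[of t "deriv g" 0] gt by blast
        obtain e2 where e2: "e2 > 0" "ball t e2 \<subseteq> ?I"
          using t open_contains_ball[of ?I] by (meson open_greaterThanLessThan)
        define e where "e = min e1 e2"
        have B: "ball t e \<subseteq> ?I" "\<forall>y\<in>ball t e. deriv g y \<noteq> 0" and "e > 0"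
          using e1 e2 unfolding e_def by (auto simp: dist_commute)
        obtain k where k: "\<forall>y\<in>ball t e. q y = k"
          using has_field_derivative_zero_constant[of "ball t e" q] B dq0
          by (metis convex_ball has_field_derivative_at_within subsetD)
        have "q t = k" using k \<open>e > 0\<close> by simp
        then have "ball t e \<subseteq> {t \<in> ?I. q t = c}" using k B True by auto
        then have "t \<in> V" unfolding V_def using \<open>e > 0\<close> mem_interior by blast
        then show ?thesis by simp
      qed
    qed
    moreover have "t0 \<in> V \<inter> ?I" 
    proof -
      have "t0 \<in> U \<union> V" using calculation(2) t0 by auto
      moreover have "t0 \<notin> U" unfolding U_def c_def by simp
      ultimately show ?thesis using t0 by auto
    qed
    ultimately have "U \<inter> ?I = {}" using connectedD[OF connected_Ioo oU oV] by blast
    then have qc: "q t = c" if "t \<in> ?I" for t using that unfolding U_def by auto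
    have "\<forall>t\<in>?I. deriv g t = c * (1 - t\<^sup>2) powr (-\<alpha>)"
    proof
      fix t assume t: "t \<in> ?I"
      show "deriv g t = c * (1 - t\<^sup>2) powr (-\<alpha>)"
        using qc[OF t] pos[OF t] unfolding q_def by (simp add: powr_minus field_simps)
    qed
    then show ?thesis using pa by blast
  qed
qed

lemma ode_bwd:
  fixes g :: "real \<Rightarrow> real" and p mm C \<alpha> :: real
  assumes g: "C2_real_on {-1<..<1} g" and p: "p \<noteq> 1"
    and G: "\<forall>z\<in>{-1<..<1}. deriv g z = C * (1 - z\<^sup>2) powr (-\<alpha>)" and pa: "p = 1 + mm / (2 * \<alpha> - 1)"
    and t: "t \<in> {-1<..<1}"
  shows "(p - 1) * (1 - t\<^sup>2) * deriv (deriv g) t - (mm + p - 1) * t * deriv g t = 0"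
proof -
  let ?I = "{-1<..<1::real}"
  have pos: "1 - t\<^sup>2 > 0" using t by (simp add: abs_square_less_1 abs_less_iff)
  have a0: "2 * \<alpha> - 1 \<noteq> 0" using pa p by auto
  have pm: "(p - 1) * (2 * \<alpha> - 1) = mm" using pa a0 by simp
  have "DERIV (\<lambda>z. C * (1 - z\<^sup>2) powr (-\<alpha>)) t :> C * (- \<alpha> * (1 - t\<^sup>2) powr (- \<alpha> - 1) * (- 2 * t))"
    by (rule derivative_eq_intros DERIV_fun_powr | (use pos in simp))+
  then have "DERIV (deriv g) t :> C * (- \<alpha> * (1 - t\<^sup>2) powr (- \<alpha> - 1) * (- 2 * t))"
    by (rule has_field_derivative_transform_within_open[where S="?I"]) (use G t in auto)
  then have d: "deriv (deriv g) t = C * (- \<alpha> * (1 - t\<^sup>2) powr (- \<alpha> - 1) * (- 2 * t))"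
    by (rule DERIV_imp_deriv)
  have pw: "(1 - t\<^sup>2) * (1 - t\<^sup>2) powr (- \<alpha> - 1) = (1 - t\<^sup>2) powr (- \<alpha>)"
    using pos by (simp add: powr_diff field_simps powr_minus)
  have "(p - 1) * (1 - t\<^sup>2) * deriv (deriv g) t = (p - 1) * 2 * \<alpha> * t * (C * (1 - t\<^sup>2) powr (- \<alpha>))"
    unfolding d pw[symmetric] by (simp add: algebra_simps)
  also have "(p - 1) * 2 * \<alpha> = mm + p - 1" using pm by (simp add: algebra_simps)
  finally show ?thesis using G t by simp
qed



locale gsetup = hsetup m \<phi> for m and \<phi> :: "real^'n \<Rightarrow> real" +
  fixes g :: "real \<Rightarrow> real" and m1 :: nat
  assumes gC2: "C2_real_on {-1<..<1} g" and card: "CARD('n) = m * m1 + 2"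
begin

definition "u x = g (z x)"

lemma dg1: "t \<in> {-1<..<1} \<Longrightarrow> DERIV g t :> deriv g t"
  using gC2 by (simp add: C2_real_on_def DERIV_deriv_iff_real_differentiable)

lemma dg2: "t \<in> {-1<..<1} \<Longrightarrow> DERIV (deriv g) t :> deriv (deriv g) t"
  using gC2 by (simp add: C2_real_on_def DERIV_deriv_iff_real_differentiable)

lemma du: assumes "x \<in> S" shows "(u has_derivative (\<lambda>h. (deriv g (z x) *\<^sub>R Dz x) \<bullet> h)) (at x)"
proof -
  have "(u has_derivative (\<lambda>h. (Dz x \<bullet> h) * deriv g (z x))) (at x)"
    unfolding u_def[abs_def] by (rule DERIV_compose_FDERIV[OF dg1[OF z_S[OF assms]] dz[OF S_nz[OF assms]]])
  moreover have "(\<lambda>h. (Dz x \<bullet> h) * deriv g (z x)) = (\<lambda>h. (deriv g (z x) *\<^sub>R Dz x) \<bullet> h)" by auto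
  ultimately show ?thesis by simp
qed

lemma grad_u: "x \<in> S \<Longrightarrow> grad u x = deriv g (z x) *\<^sub>R Dz x"
  using du grad_eqI by blast

definition "L2 x i h = deriv (deriv g) (z x) * (Dz x \<bullet> h) * Dz x $ i + deriv g (z x) * D2 x i h"

lemma dgu: assumes "x \<in> S" shows "((\<lambda>y. grad u y $ i) has_derivative L2 x i) (at x)"
proof -
  have "((\<lambda>y. deriv g (z y) * Dz y $ i) has_derivative (\<lambda>h. deriv g (z x) * D2 x i h + (Dz x \<bullet> h * deriv (deriv g) (z x)) * Dz x $ i)) (at x)"
    by (rule has_derivative_mult[OF DERIV_compose_FDERIV[OF dg2[OF z_S[OF assms]] dz[OF S_nz[OF assms]]] dDz[OF S_nz[OF assms]]])
  moreover have "(\<lambda>h. deriv g (z x) * D2 x i h + (Dz x \<bullet> h * deriv (deriv g) (z x)) * Dz x $ i) = L2 x i"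
    by (auto simp: L2_def fun_eq_iff)
  ultimately have "((\<lambda>y. deriv g (z y) * Dz y $ i) has_derivative L2 x i) (at x)" by simp
  then show ?thesis
    by (rule has_derivative_transform_within_open[OF _ open_S assms]) (simp add: grad_u)
qed

lemma partial2_u: "x \<in> S \<Longrightarrow> partial2 u i j x = L2 x i (axis j 1)"
  unfolding partial2_def using dgu frechet_derivative_at by metis

lemma lap_u: assumes "x \<in> S"
  shows "laplacian u x = deriv (deriv g) (z x) * (norm (Dz x))\<^sup>2 + deriv g (z x) * (- real m * (real CARD('n) + real m - 2) * z x / (norm x)\<^sup>2)"
proof -
  have "laplacian u x = (\<Sum>i\<in>UNIV. deriv (deriv g) (z x) * (Dz x $ i * Dz x $ i) + deriv g (z x) * D2 x i (axis i 1))"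
    unfolding laplacian_def using partial2_u[OF assms] by (simp add: L2_def inner_axis mult.assoc)
  also have "\<dots> = deriv (deriv g) (z x) * (Dz x \<bullet> Dz x) + deriv g (z x) * (\<Sum>i\<in>UNIV. D2 x i (axis i 1))"
    by (simp add: sum.distrib sum_distrib_left inner_vec_def)
  finally show ?thesis using trD2[OF S_nz[OF assms]] by (simp add: power2_norm_eq_inner)
qed


definition "K t = (deriv g t)\<^sup>2 * (1 - t\<^sup>2)"
definition "K' t = 2 * deriv g t * deriv (deriv g) t * (1 - t\<^sup>2) + (deriv g t)\<^sup>2 * (- 2 * t)"
definition "Wv x = ((real m)\<^sup>2 * K' (z x) / (norm x)\<^sup>2) *\<^sub>R Dz x - (2 * (real m)\<^sup>2 * K (z x) / ((norm x)\<^sup>2 * (norm x)\<^sup>2)) *\<^sub>R x"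

lemma dK: "t \<in> {-1<..<1} \<Longrightarrow> DERIV K t :> K' t"
proof -
  assume t: "t \<in> {-1<..<1}"
  have "DERIV (\<lambda>t. deriv g t * deriv g t * (1 - t * t)) t :> K' t"
    unfolding K'_def
    by (auto intro!: derivative_eq_intros dg2[OF t] simp: power2_eq_square algebra_simps)
  then show ?thesis unfolding K_def[abs_def] by (simp add: power2_eq_square)
qed

lemma norm_grad_u: "x \<in> S \<Longrightarrow> (norm (grad u x))\<^sup>2 = (real m)\<^sup>2 * K (z x) / (norm x)\<^sup>2"
  using norm_Dz[OF S_nz] by (simp add: grad_u K_def power_mult_distrib)

lemma dw: assumes "x \<in> S" shows "((\<lambda>y. (norm (grad u y))\<^sup>2) has_derivative (\<lambda>h. Wv x \<bullet> h)) (at x)"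
proof -
  have x0: "x \<noteq> 0" using S_nz[OF assms] .
  have d1: "((\<lambda>y. (real m)\<^sup>2 * K (z y)) has_derivative (\<lambda>h. (real m)\<^sup>2 * ((Dz x \<bullet> h) * K' (z x)))) (at x)"
    by (rule has_derivative_mult[OF has_derivative_const DERIV_compose_FDERIV[OF dK[OF z_S[OF assms]] dz[OF x0]], simplified])
  have "((\<lambda>y. (real m)\<^sup>2 * K (z y) / (norm y)\<^sup>2) has_derivative
    (\<lambda>h. - ((real m)\<^sup>2 * K (z x)) * (inverse ((norm x)\<^sup>2) * ((real 2 * (norm x)\<^sup>2 / (norm x)\<^sup>2) * (x \<bullet> h)) * inverse ((norm x)\<^sup>2)) + (real m)\<^sup>2 * ((Dz x \<bullet> h) * K' (z x)) / (norm x)\<^sup>2)) (at x)"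
    by (rule has_derivative_divide[OF d1 norm_pow_deriv[OF x0]]) (use x0 in simp)
  moreover have "(\<lambda>h. - ((real m)\<^sup>2 * K (z x)) * (inverse ((norm x)\<^sup>2) * ((real 2 * (norm x)\<^sup>2 / (norm x)\<^sup>2) * (x \<bullet> h)) * inverse ((norm x)\<^sup>2)) + (real m)\<^sup>2 * ((Dz x \<bullet> h) * K' (z x)) / (norm x)\<^sup>2) = (\<lambda>h. Wv x \<bullet> h)"
    using x0 by (auto simp: Wv_def inner_diff_left field_simps fun_eq_iff)
  ultimately have "((\<lambda>y. (real m)\<^sup>2 * K (z y) / (norm y)\<^sup>2) has_derivative (\<lambda>h. Wv x \<bullet> h)) (at x)" by simp
  then show ?thesis
    by (rule has_derivative_transform_within_open[OF _ open_S assms]) (simp add: norm_grad_u)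
qed

lemma plap: assumes "x \<in> S"
  shows "p_laplacian p u x = (norm (Dz x))\<^sup>2 * ((real m)\<^sup>2 / (norm x)\<^sup>2) * (deriv g (z x))\<^sup>2 *
    ((p - 1) * (1 - (z x)\<^sup>2) * deriv (deriv g) (z x) - (real m1 + p - 1) * z x * deriv g (z x))"
proof -
  have x0: "x \<noteq> 0" using S_nz[OF assms] .
  have gw: "grad (\<lambda>y. (norm (grad u y))\<^sup>2) x = Wv x" using dw[OF assms] grad_eqI by blast
  have ip: "grad u x \<bullet> Wv x = deriv g (z x) * (((real m)\<^sup>2 * K' (z x) / (norm x)\<^sup>2) * (norm (Dz x))\<^sup>2)"
  proof -
    have "grad u x \<bullet> Wv x = (deriv g (z x) *\<^sub>R Dz x) \<bullet> (((real m)\<^sup>2 * K' (z x) / (norm x)\<^sup>2) *\<^sub>R Dz x - (2 * (real m)\<^sup>2 * K (z x) / ((norm x)\<^sup>2 * (norm x)\<^sup>2)) *\<^sub>R x)"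
      by (simp only: grad_u[OF assms] Wv_def)
    also have "\<dots> = deriv g (z x) * (((real m)\<^sup>2 * K' (z x) / (norm x)\<^sup>2) * (Dz x \<bullet> Dz x)) - deriv g (z x) * ((2 * (real m)\<^sup>2 * K (z x) / ((norm x)\<^sup>2 * (norm x)\<^sup>2)) * (Dz x \<bullet> x))"
      by (simp only: inner_diff_right inner_scaleR_left inner_scaleR_right mult.left_commute)
    also have "\<dots> = deriv g (z x) * (((real m)\<^sup>2 * K' (z x) / (norm x)\<^sup>2) * (norm (Dz x))\<^sup>2)"
      by (simp only: Dz_x[OF x0] power2_norm_eq_inner mult_zero_right diff_zero)
    finally show ?thesis .
  qed
  have ng: "(norm (grad u x))\<^sup>2 = (deriv g (z x))\<^sup>2 * (norm (Dz x))\<^sup>2"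
    by (simp add: grad_u[OF assms] power_mult_distrib)
  have "p_laplacian p u x = (deriv g (z x))\<^sup>2 * (norm (Dz x))\<^sup>2 * (deriv (deriv g) (z x) * (norm (Dz x))\<^sup>2 + deriv g (z x) * (- real m * (real CARD('n) + real m - 2) * z x / (norm x)\<^sup>2))
     + (p - 2) / 2 * (deriv g (z x) * (((real m)\<^sup>2 * K' (z x) / (norm x)\<^sup>2) * (norm (Dz x))\<^sup>2))"
    unfolding p_laplacian_def gw ip ng lap_u[OF assms] ..
  also have "\<dots> = (norm (Dz x))\<^sup>2 * ((real m)\<^sup>2 / (norm x)\<^sup>2) * (deriv g (z x))\<^sup>2 *
    ((p - 1) * (1 - (z x)\<^sup>2) * deriv (deriv g) (z x) - (real m1 + p - 1) * z x * deriv g (z x))"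
    unfolding K'_def
    by (rule alg) (use x0 norm_Dz[OF x0] card in auto)
  finally show ?thesis .
qed

definition "dzc i x = Dz x $ i"
definition "gphi i x = grad \<phi> x $ i"
definition "hh i j x = H i x $ j"

lemma cont_Dz: "continuous_on S (dzc i)"
  unfolding dzc_def[abs_def] Dz_def a1_def a2_def vector_minus_component vector_scaleR_component
  by (intro continuous_intros cont_grad cont_phi) (auto simp: S_def)

lemma cont_gphi: "continuous_on S (gphi i)"
  unfolding gphi_def[abs_def] by (rule cont_grad)

lemma cont_hh: "continuous_on S (hh i j)"
  unfolding hh_def[abs_def] by (rule cont_H)

lemma C2u: "C2_on S u"
  unfolding C2_on_def
proof (intro conjI allI ballI)
  fix x assume x: "x \<in> S"
  show "u differentiable at x" using du[OF x] by (rule differentiableI)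
  fix i show "(\<lambda>y. grad u y $ i) differentiable at x" using dgu[OF x] by (rule differentiableI)
next
  fix i j
  have zc: "continuous_on S z" using z_cont by (rule continuous_on_subset) (auto simp: S_def)
  have zS: "z ` S \<subseteq> {-1<..<1}" using z_S by auto
  have g1c: "continuous_on S (\<lambda>x. deriv g (z x))"
    by (rule continuous_on_compose2[OF _ zc zS]) (meson DERIV_isCont continuous_at_imp_continuous_on dg2)
  have g2c: "continuous_on S (\<lambda>x. deriv (deriv g) (z x))"
    by (rule continuous_on_compose2[OF _ zc zS]) (use gC2 in \<open>simp add: C2_real_on_def\<close>)
  have e: "partial2 u i j x = deriv (deriv g) (z x) * dzc j x * dzc i x + deriv g (z x) *
      ((- real m / (norm x ^ m * (norm x)\<^sup>2)) * x $ j * gphi i x + (1 / norm x ^ m) * hh i j x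
       - ((real m / (norm x ^ m * (norm x)\<^sup>2)) * gphi j x - (real m * (real m + 2) * \<phi> x / (norm x ^ m * ((norm x)\<^sup>2 * (norm x)\<^sup>2))) * x $ j) * x $ i
       - (real m * \<phi> x / (norm x ^ m * (norm x)\<^sup>2)) * (if i = j then 1 else 0))" if "x \<in> S" for x
    using partial2_u[OF that] unfolding L2_def D2_def inner_axis
    by (simp add: dzc_def gphi_def hh_def A1_def A2_def a1_def a2_def axis_def)
  show "continuous_on S (partial2 u i j)"
    apply (rule continuous_on_eq[OF _ e[symmetric]])
     apply (intro continuous_intros cont_gphi cont_phi cont_hh cont_Dz g1c g2c)
    apply (auto simp: S_def)
    done
qed

end



theorem proposition4p2:
  fixes m m1 :: nat and \<phi> :: "real^'n \<Rightarrow> real" and g :: "real \<Rightarrow> real" and p :: real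
  assumes "m \<ge> 1" and "m1 \<ge> 1"
    and "CARD('n) = m * m1 + 2"
    and "homogeneous_poly m \<phi>"
    and "\<forall>x. (norm (grad \<phi> x))\<^sup>2 = (real m)\<^sup>2 * norm x ^ (2 * m - 2)"
    and "\<forall>x. laplacian \<phi> x = 0"
    and "C2_real_on {-1<..<1} g"
    and "p \<noteq> 1"
  shows "p_harmonic_on p {x. x \<noteq> 0 \<and> \<bar>\<phi> x\<bar> < norm x ^ m} (\<lambda>x. g (\<phi> x / norm x ^ m))
     \<longleftrightarrow> (\<exists>C \<alpha>::real. (\<forall>z\<in>{-1<..<1}. deriv g z = C * (1 - z\<^sup>2) powr (-\<alpha>))
              \<and> p = 1 + real m1 / (2 * \<alpha> - 1))"
proof -
  interpret gsetup m \<phi> g m1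
    by unfold_locales (use assms in auto)
  have Seq: "{x. x \<noteq> 0 \<and> \<bar>\<phi> x\<bar> < norm x ^ m} = S" by (simp add: S_def)
  have ueq: "(\<lambda>x. g (\<phi> x / norm x ^ m)) = u" by (simp add: u_def[abs_def] z_def[abs_def])
  define E where "E t = (p - 1) * (1 - t\<^sup>2) * deriv (deriv g) t - (real m1 + p - 1) * t * deriv g t" for t
  have key: "p_laplacian p u x = 0 \<longleftrightarrow> (deriv g (z x))\<^sup>2 * E (z x) = 0" if x: "x \<in> S" for x
  proof -
    have x0: "x \<noteq> 0" using S_nz[OF x] .
    have zI: "(z x)\<^sup>2 < 1" using z_S[OF x] by (simp add: abs_square_less_1 abs_less_iff)
    have "(norm (Dz x))\<^sup>2 > 0" using norm_Dz[OF x0] zI x0 assms(1) by simp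
    moreover have "(real m)\<^sup>2 / (norm x)\<^sup>2 > 0" using x0 assms(1) by simp
    ultimately show ?thesis using plap[OF x] x0 assms(1) unfolding E_def by auto
  qed
  show ?thesis
    unfolding Seq ueq p_harmonic_on_def
  proof
    assume h: "C2_on S u \<and> (\<forall>x\<in>S. p_laplacian p u x = 0)"
    have "\<forall>t\<in>{-1<..<1}. (deriv g t)\<^sup>2 * E t = 0"
    proof
      fix t :: real assume t: "t \<in> {-1<..<1}"
      have "CARD('n) \<ge> 2" using assms(3) by simp
      then obtain x where x: "x \<noteq> 0" "\<bar>\<phi> x\<bar> < norm x ^ m" "z x = t"
        using z_surj[of t] t by auto
      then have xS: "x \<in> S" by (simp add: S_def)
      show "(deriv g t)\<^sup>2 * E t = 0" using key[OF xS] h xS x(3) by auto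
    qed
    then show "\<exists>C \<alpha>::real. (\<forall>z\<in>{-1<..<1}. deriv g z = C * (1 - z\<^sup>2) powr (-\<alpha>)) \<and> p = 1 + real m1 / (2 * \<alpha> - 1)"
      using ode_fwd[OF assms(7,8), of "real m1"] assms(2) unfolding E_def by simp
  next
    assume "\<exists>C \<alpha>::real. (\<forall>z\<in>{-1<..<1}. deriv g z = C * (1 - z\<^sup>2) powr (-\<alpha>)) \<and> p = 1 + real m1 / (2 * \<alpha> - 1)"
    then obtain C \<alpha> where C: "\<forall>z\<in>{-1<..<1}. deriv g z = C * (1 - z\<^sup>2) powr (-\<alpha>)" "p = 1 + real m1 / (2 * \<alpha> - 1)"
      by blast
    have "\<forall>x\<in>S. p_laplacian p u x = 0"
    proof
      fix x assume x: "x \<in> S"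
      have "E (z x) = 0" unfolding E_def by (rule ode_bwd[OF assms(7,8) C z_S[OF x]])
      then show "p_laplacian p u x = 0" using key[OF x] by simp
    qed
    then show "C2_on S u \<and> (\<forall>x\<in>S. p_laplacian p u x = 0)" using C2u by simp
  qed
qed


end
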